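(* Let $k,l\geq0$ be integers and $X,Y,Z,V$ be $N\times N$ real symmetric positive semidefinite matrices. Then, in the Löwner order, \[ X^{k}\otimes V\otimes X^{l}+(X+Y+Z)^{k}\otimes V\otimes(X+Y+Z)^{l}\geq(X+Y)^{k}\otimes V\otimes(X+Y)^{l}+(X+Z)^{k}\otimes V\otimes(X+Z)^{l}. \]
   Context: Notation: for a matrix $W$ and $j\geq1$, $W^{j}$ denotes the $j$-fold tensor (Kronecker) power $W\otimes\cdots\otimes W$, and $W^{0}=1$ (the scalar one, so that tensoring with $W^{0}$ leaves a factor unchanged). The Löwner order: $S\leq T$ iff $T-S$ is positive semidefinite. *)

theory Defs
  imports "Jordan_Normal_Form.Matrix"
begin

definition kron :: "'a::semiring_1 mat \<Rightarrow> 'a mat \<Rightarrow> 'a mat" where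
  "kron A B = mat (dim_row A * dim_row B) (dim_col A * dim_col B)
     (\<lambda>(i,j). A $$ (i div dim_row B, j div dim_col B) * B $$ (i mod dim_row B, j mod dim_col B))"

fun kron_pow :: "'a::semiring_1 mat \<Rightarrow> nat \<Rightarrow> 'a mat" where
  "kron_pow W 0 = 1\<^sub>m 1"
| "kron_pow W (Suc j) = kron W (kron_pow W j)"

definition psd :: "real mat \<Rightarrow> bool" where
  "psd A \<longleftrightarrow> dim_row A = dim_col A \<and> transpose_mat A = A \<and>
     (\<forall>v \<in> carrier_vec (dim_row A). v \<bullet> (A *\<^sub>v v) \<ge> 0)"

definition loewner_le :: "real mat \<Rightarrow> real mat \<Rightarrow> bool" where
  "loewner_le S T \<longleftrightarrow> dim_row S = dim_row T \<and> dim_col S = dim_col T \<and> psd (T - S)"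

end

theory Submission
  imports Defs
begin

lemma sum_lessThan_add: "sum f {..<a+m} = sum f {..<a} + (\<Sum>q<m. f (a+q::nat))" for f :: "nat \<Rightarrow> real"
  by (induction m) (auto simp: ac_simps)
lemma sum_split_mult: "sum f {..<n*m} = (\<Sum>p<n. \<Sum>q<m. f (p*m+q::nat)) " for f :: "nat \<Rightarrow> real"
proof (induction n)
  case 0 then show ?case by simp
next
  case (Suc n)
  have "sum f {..<n*m + m} = sum f {..<n*m} + (\<Sum>q<m. f (n*m+q))"
    by (rule sum_lessThan_add)
  then show ?case using Suc by (simp add: ac_simps)
qed


definition Q :: "nat set \<Rightarrow> (nat\<Rightarrow>nat\<Rightarrow>real) \<Rightarrow> (nat\<Rightarrow>real) \<Rightarrow> real" where
  "Q S A x = (\<Sum>i\<in>S. \<Sum>j\<in>S. x i * A i j * x j)"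
definition psdS :: "nat set \<Rightarrow> (nat\<Rightarrow>nat\<Rightarrow>real) \<Rightarrow> bool" where
  "psdS S A \<longleftrightarrow> (\<forall>i\<in>S. \<forall>j\<in>S. A i j = A j i) \<and> (\<forall>x. 0 \<le> Q S A x)"

lemma sum_delta_mult: "finite S \<Longrightarrow> s \<in> S \<Longrightarrow> (\<Sum>i\<in>S. (if i = s then t else 0) * g i) = (t::real) * g s"
proof -
  assume "finite S" "s \<in> S"
  have "(\<Sum>i\<in>S. (if i = s then t else 0) * g i) = (\<Sum>i\<in>S. if i = s then t * g s else 0)"
    by (rule sum.cong) auto
  then show ?thesis using \<open>finite S\<close> \<open>s \<in> S\<close> by simp
qed

lemma Q_shift:
  assumes fin: "finite S" and s: "s \<in> S" and sym: "\<forall>i\<in>S. \<forall>j\<in>S. A i j = A j i"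
  shows "Q S A (\<lambda>i. y i + (if i = s then t else 0)) = Q S A y + 2*t*(\<Sum>j\<in>S. A s j * y j) + t^2 * A s s"
proof -
  let ?d = "\<lambda>i::nat. if i = s then t else 0"
  have e: "(y i + ?d i) * A i j * (y j + ?d j) = y i * A i j * y j + ?d i * (A i j * y j) + ?d j * (y i * A i j) + ?d i * (?d j * A i j)" for i j
    by (simp add: algebra_simps)
  have "Q S A (\<lambda>i. y i + ?d i) = Q S A y + (\<Sum>i\<in>S. \<Sum>j\<in>S. ?d i * (A i j * y j)) + (\<Sum>i\<in>S. \<Sum>j\<in>S. ?d j * (y i * A i j))
      + (\<Sum>i\<in>S. \<Sum>j\<in>S. ?d i * (?d j * A i j))"
    unfolding Q_def e by (simp add: sum.distrib)
  also have "(\<Sum>i\<in>S. \<Sum>j\<in>S. ?d i * (A i j * y j)) = t * (\<Sum>j\<in>S. A s j * y j)"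
    using fin s by (simp add: sum_delta_mult sum_distrib_left[symmetric])
  also have "(\<Sum>i\<in>S. \<Sum>j\<in>S. ?d j * (y i * A i j)) = (\<Sum>i\<in>S. t * (y i * A i s))"
    using fin s by (simp add: sum_delta_mult)
  also have "\<dots> = t * (\<Sum>j\<in>S. A s j * y j)"
    using sym s by (simp add: sum_distrib_left mult.commute)
  also have "(\<Sum>i\<in>S. \<Sum>j\<in>S. ?d i * (?d j * A i j)) = t^2 * A s s"
    using fin s by (simp add: sum_delta_mult sum_distrib_left[symmetric] power2_eq_square)
  finally show ?thesis by simp
qed



lemma psdS_Q: "psdS S A \<Longrightarrow> 0 \<le> Q S A x" by (simp add: psdS_def)

lemma Q_zero[simp]: "Q S A (\<lambda>_. 0) = 0" by (simp add: Q_def)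

lemma psdS_diag: assumes "finite S" "psdS S A" "s \<in> S" shows "0 \<le> A s s"
proof -
  have "Q S A (\<lambda>i. 0 + (if i = s then 1 else 0)) = A s s"
    using Q_shift[of S s A "\<lambda>_. 0" 1] assms by (simp add: psdS_def)
  then show ?thesis using psdS_Q[OF assms(2)] by (smt (verit))
qed

lemma psdS_zero_row: assumes fin: "finite S" and p: "psdS S A" and s: "s \<in> S" and a: "A s s = 0" and j: "j \<in> S"
  shows "A s j = 0"
proof (rule ccontr)
  assume ne: "A s j \<noteq> 0"
  have sym: "\<forall>i\<in>S. \<forall>j\<in>S. A i j = A j i" using p by (simp add: psdS_def)
  define e where "e = (\<lambda>i::nat. 0 + (if i = j then (1::real) else 0))"
  have "(\<Sum>k\<in>S. A s k * e k) = A s j"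
    using fin j sum_delta_mult[of S j 1 "\<lambda>k. A s k"] by (simp add: e_def mult.commute)
  moreover have "Q S A e = A j j"
    using Q_shift[of S j A "\<lambda>_. 0" 1] fin j sym by (simp add: e_def)
  ultimately have "Q S A (\<lambda>i. e i + (if i = s then t else 0)) = A j j + 2 * t * A s j" for t
    using Q_shift[of S s A e t] fin s sym a by simp
  from this[of "- (A j j + 1) / (2 * A s j)"] ne
  have "Q S A (\<lambda>i. e i + (if i = s then - (A j j + 1) / (2 * A s j) else 0)) = -1"
    by (simp add: field_simps)
  then show False using psdS_Q[OF p] by (smt (verit))
qed

lemma double_sum_insert_zero:
  assumes "finite T" "s \<notin> T" "\<forall>j\<in>insert s T. f s j = (0::real)" "\<forall>i\<in>insert s T. f i s = 0"
  shows "(\<Sum>i\<in>insert s T. \<Sum>j\<in>insert s T. f i j) = (\<Sum>i\<in>T. \<Sum>j\<in>T. f i j)"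
  using assms by (simp add: sum.insert)



lemma trace_nonneg:
  assumes "finite S" shows "psdS S A \<Longrightarrow> psdS S G \<Longrightarrow> 0 \<le> (\<Sum>i\<in>S. \<Sum>j\<in>S. A i j * G i j)"
  using assms
proof (induction S arbitrary: A rule: finite_induct)
  case empty then show ?case by simp
next
  case (insert s T)
  let ?S = "insert s T"
  have finS: "finite ?S" using insert.hyps(1) by simp
  have symA: "\<forall>i\<in>?S. \<forall>j\<in>?S. A i j = A j i" using insert.prems(1) unfolding psdS_def by blast
  have symG: "\<forall>i\<in>?S. \<forall>j\<in>?S. G i j = G j i" using insert.prems(2) unfolding psdS_def by blast
  define a where "a = A s s"
  have a0: "0 \<le> a" unfolding a_def using psdS_diag[OF finS insert.prems(1) insertI1] .
  define A' where "A' = (\<lambda>i j. A i j - A i s * A s j / a)"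
  \<comment> \<open>Schur complement is psd\<close>
  have QA': "Q ?S A' x = Q ?S A x - (\<Sum>j\<in>?S. A s j * x j)^2 / a" for x
  proof -
    have "Q ?S A' x = Q ?S A x - (\<Sum>i\<in>?S. \<Sum>j\<in>?S. (x i * A i s) * (A s j * x j)) / a"
      unfolding Q_def A'_def sum_divide_distrib sum_subtractf[symmetric]
      by (intro sum.cong refl) (simp add: algebra_simps)
    also have "(\<Sum>i\<in>?S. \<Sum>j\<in>?S. (x i * A i s) * (A s j * x j)) = (\<Sum>i\<in>?S. x i * A i s) * (\<Sum>j\<in>?S. A s j * x j)"
      by (simp add: sum_product)
    also have "(\<Sum>i\<in>?S. x i * A i s) = (\<Sum>j\<in>?S. A s j * x j)"
      using symA by (intro sum.cong) auto
    finally show ?thesis by (simp add: power2_eq_square)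
  qed
  have psdA': "psdS ?S A'"
    unfolding psdS_def
  proof (intro conjI ballI allI)
    fix i j assume "i \<in> ?S" "j \<in> ?S"
    then show "A' i j = A' j i" using symA unfolding A'_def by auto
  next
    fix x
    show "0 \<le> Q ?S A' x"
    proof (cases "a = 0")
      case True then show ?thesis using QA' insert.prems(1) by (simp add: psdS_def)
    next
      case False
      define c where "c = (\<Sum>j\<in>?S. A s j * x j)"
      have "Q ?S A (\<lambda>i. x i + (if i = s then - c / a else 0)) = Q ?S A x + 2 * (- c / a) * c + (- c / a)^2 * a"
        using Q_shift[OF finS insertI1 symA, of x "- c / a"] by (simp add: c_def a_def)
      also have "\<dots> = Q ?S A' x" using QA' False by (simp add: c_def field_simps power2_eq_square)
      finally show ?thesis using psdS_Q[OF insert.prems(1)] by (smt (verit))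
    qed
  qed
  have rowA': "A' s j = 0" if "j \<in> ?S" for j
  proof (cases "a = 0")
    case True
    have "A s j = 0" using psdS_zero_row[OF finS insert.prems(1) insertI1 True[unfolded a_def] that] .
    then show ?thesis by (simp add: A'_def)
  next
    case False then show ?thesis by (simp add: A'_def a_def)
  qed
  have colA': "A' i s = 0" if "i \<in> ?S" for i
  proof -
    have "A' i s = A' s i" using psdA' that unfolding psdS_def by blast
    then show ?thesis using rowA'[OF that] by simp
  qed
  have psdT: "psdS T A'"
    unfolding psdS_def
  proof (intro conjI ballI allI)
    fix i j assume "i \<in> T" "j \<in> T"
    then show "A' i j = A' j i" using psdA' unfolding psdS_def by blast
  next
    fix x
    have "Q ?S A' x = Q T A' x" unfolding Q_def
      by (rule double_sum_insert_zero) (use insert.hyps rowA' colA' in auto)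
    then show "0 \<le> Q T A' x" using psdS_Q[OF psdA'] by (smt (verit))
  qed
  have psdGT: "psdS T G"
    unfolding psdS_def
  proof (intro conjI ballI allI)
    fix i j assume "i \<in> T" "j \<in> T"
    then show "G i j = G j i" using symG by auto
  next
    fix x
    define x' where "x' = (\<lambda>i. if i = s then 0 else (x i::real))"
    have "Q ?S G x' = Q T G x'" unfolding Q_def
      by (rule double_sum_insert_zero) (use insert.hyps in \<open>auto simp: x'_def\<close>)
    also have "Q T G x' = Q T G x" unfolding Q_def x'_def using insert.hyps
      by (intro sum.cong refl) auto
    finally show "0 \<le> Q T G x" using psdS_Q[OF insert.prems(2)] by (smt (verit))
  qed
  have IH: "0 \<le> (\<Sum>i\<in>T. \<Sum>j\<in>T. A' i j * G i j)" using insert.IH[OF psdT psdGT] .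
  have "(\<Sum>i\<in>?S. \<Sum>j\<in>?S. A' i j * G i j) = (\<Sum>i\<in>T. \<Sum>j\<in>T. A' i j * G i j)"
    by (rule double_sum_insert_zero) (use insert.hyps rowA' colA' in auto)
  moreover have "0 \<le> (\<Sum>i\<in>?S. \<Sum>j\<in>?S. (A i s * A s j / a) * G i j)"
  proof -
    have "(\<Sum>i\<in>?S. \<Sum>j\<in>?S. (A i s * A s j / a) * G i j) = Q ?S G (\<lambda>i. A i s) / a"
    proof -
      have e: "(A i s * A s j / a) * G i j = (A i s * G i j * A j s) / a" if "i \<in> ?S" "j \<in> ?S" for i j
      proof -
        have "A s j = A j s" using symA that by blast
        then show ?thesis by simp
      qed
      have "(\<Sum>i\<in>?S. \<Sum>j\<in>?S. (A i s * A s j / a) * G i j) = (\<Sum>i\<in>?S. \<Sum>j\<in>?S. (A i s * G i j * A j s) / a)"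
        using e by (intro sum.cong refl) auto
      then show ?thesis unfolding Q_def sum_divide_distrib .
    qed
    then show ?thesis using insert.prems(2) a0 unfolding psdS_def by simp
  qed
  moreover have "(\<Sum>i\<in>?S. \<Sum>j\<in>?S. A i j * G i j) = (\<Sum>i\<in>?S. \<Sum>j\<in>?S. A' i j * G i j) + (\<Sum>i\<in>?S. \<Sum>j\<in>?S. (A i s * A s j / a) * G i j)"
    unfolding A'_def sum.distrib[symmetric] by (intro sum.cong refl) (simp add: algebra_simps)
  ultimately show ?case using IH by linarith
qed



lemma sum4_swap:
  "(\<Sum>p\<in>P. \<Sum>p'\<in>P. \<Sum>q\<in>M. \<Sum>q'\<in>M. f p p' q q') = (\<Sum>q\<in>M. \<Sum>q'\<in>M. \<Sum>p\<in>P. \<Sum>p'\<in>P. (f p p' q q' :: real))"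
proof -
  have "(\<Sum>p\<in>P. \<Sum>p'\<in>P. \<Sum>q\<in>M. \<Sum>q'\<in>M. f p p' q q') = (\<Sum>p\<in>P. \<Sum>q\<in>M. \<Sum>p'\<in>P. \<Sum>q'\<in>M. f p p' q q')"
    by (rule sum.cong[OF refl], rule sum.swap)
  also have "\<dots> = (\<Sum>p\<in>P. \<Sum>q\<in>M. \<Sum>q'\<in>M. \<Sum>p'\<in>P. f p p' q q')"
    by (rule sum.cong[OF refl], rule sum.cong[OF refl], rule sum.swap)
  also have "\<dots> = (\<Sum>q\<in>M. \<Sum>p\<in>P. \<Sum>q'\<in>M. \<Sum>p'\<in>P. f p p' q q')"
    by (rule sum.swap)
  also have "\<dots> = (\<Sum>q\<in>M. \<Sum>q'\<in>M. \<Sum>p\<in>P. \<Sum>p'\<in>P. f p p' q q')"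
    by (rule sum.cong[OF refl], rule sum.swap)
  finally show ?thesis .
qed

lemma kron_psdS:
  assumes pA: "psdS {..<n} A" and pB: "psdS {..<m} B"
  shows "psdS {..<n*m} (\<lambda>i j. A (i div m) (j div m) * B (i mod m) (j mod m))"
  unfolding psdS_def
proof (intro conjI ballI allI)
  fix i j assume i: "i \<in> {..<n*m}" and j: "j \<in> {..<n*m}"
  then have m: "m > 0" by (cases m) auto
  have "i div m < n" "j div m < n" using i j m by (auto simp: less_mult_imp_div_less)
  moreover have "i mod m < m" "j mod m < m" using m by auto
  ultimately have "A (i div m) (j div m) = A (j div m) (i div m)" "B (i mod m) (j mod m) = B (j mod m) (i mod m)"
    using pA pB unfolding psdS_def by auto
  then show "A (i div m) (j div m) * B (i mod m) (j mod m) = A (j div m) (i div m) * B (j mod m) (i mod m)" by simp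
next
  fix x :: "nat \<Rightarrow> real"
  define G where "G = (\<lambda>p p'. \<Sum>q<m. \<Sum>q'<m. x (p*m+q) * B q q' * x (p'*m+q'))"
  have "Q {..<n*m} (\<lambda>i j. A (i div m) (j div m) * B (i mod m) (j mod m)) x
      = (\<Sum>p<n. \<Sum>q<m. \<Sum>p'<n. \<Sum>q'<m. x (p*m+q) * (A p p' * B q q') * x (p'*m+q'))"
    unfolding Q_def sum_split_mult by (intro sum.cong refl) simp
  also have "\<dots> = (\<Sum>p<n. \<Sum>p'<n. \<Sum>q<m. \<Sum>q'<m. x (p*m+q) * (A p p' * B q q') * x (p'*m+q'))"
    by (rule sum.cong[OF refl], rule sum.swap)
  also have "\<dots> = (\<Sum>p<n. \<Sum>p'<n. A p p' * G p p')"
    unfolding G_def by (simp add: sum_distrib_left mult_ac)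
  finally have eq: "Q {..<n*m} (\<lambda>i j. A (i div m) (j div m) * B (i mod m) (j mod m)) x = (\<Sum>p<n. \<Sum>p'<n. A p p' * G p p')" .
  have pG: "psdS {..<n} G"
    unfolding psdS_def
  proof (intro conjI ballI allI)
    fix p p' assume "p \<in> {..<n}" "p' \<in> {..<n}"
    have "G p p' = (\<Sum>q'<m. \<Sum>q<m. x (p*m+q) * B q q' * x (p'*m+q'))"
      unfolding G_def by (rule sum.swap)
    also have "\<dots> = G p' p" unfolding G_def
    proof (intro sum.cong refl)
      fix q q' assume "q \<in> {..<m}" "q' \<in> {..<m}"
      then have "B q q' = B q' q" using pB unfolding psdS_def by blast
      then show "x (p*m+q) * B q q' * x (p'*m+q') = x (p'*m+q') * B q' q * x (p*m+q)" by simp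
    qed
    finally show "G p p' = G p' p" .
  next
    fix y :: "nat \<Rightarrow> real"
    define z where "z = (\<lambda>q. \<Sum>p<n. y p * x (p*m+q))"
    have "Q {..<n} G y = (\<Sum>p<n. \<Sum>p'<n. \<Sum>q<m. \<Sum>q'<m. (y p * x (p*m+q)) * B q q' * (y p' * x (p'*m+q')))"
      unfolding Q_def G_def by (simp add: sum_distrib_left sum_distrib_right mult_ac)
    also have "\<dots> = (\<Sum>q<m. \<Sum>q'<m. \<Sum>p<n. \<Sum>p'<n. (y p * x (p*m+q)) * B q q' * (y p' * x (p'*m+q')))"
      by (rule sum4_swap)
    also have "\<dots> = Q {..<m} B z"
      unfolding Q_def z_def by (simp add: sum_distrib_left sum_distrib_right mult_ac)
    finally show "0 \<le> Q {..<n} G y" using psdS_Q[OF pB] by simp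
  qed
  show "0 \<le> Q {..<n*m} (\<lambda>i j. A (i div m) (j div m) * B (i mod m) (j mod m)) x"
    unfolding eq using trace_nonneg[OF _ pA pG] by simp
qed



definition ent :: "real mat \<Rightarrow> nat \<Rightarrow> nat \<Rightarrow> real" where "ent M i j = M $$ (i,j)"
definition kf :: "nat \<Rightarrow> (nat\<Rightarrow>nat\<Rightarrow>real) \<Rightarrow> (nat\<Rightarrow>nat\<Rightarrow>real) \<Rightarrow> nat \<Rightarrow> nat \<Rightarrow> real" where
  "kf m A B i j = A (i div m) (j div m) * B (i mod m) (j mod m)"

lemma kf_psdS: "psdS {..<n} A \<Longrightarrow> psdS {..<m} B \<Longrightarrow> psdS {..<n*m} (kf m A B)"
  unfolding kf_def by (rule kron_psdS)

lemma psdS_cong: assumes "psdS S A" "\<And>i j. i \<in> S \<Longrightarrow> j \<in> S \<Longrightarrow> A i j = B i j" shows "psdS S B"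
proof -
  have q: "Q S A x = Q S B x" for x unfolding Q_def using assms(2) by (intro sum.cong refl) auto
  have "B i j = B j i" if "i \<in> S" "j \<in> S" for i j
  proof -
    have "A i j = A j i" using assms(1) that unfolding psdS_def by blast
    then show ?thesis using assms(2) that by metis
  qed
  moreover have "0 \<le> Q S B x" for x using psdS_Q[OF assms(1), of x] q[of x] by simp
  ultimately show ?thesis unfolding psdS_def by blast
qed

lemma psdS_add: assumes "psdS S A" "psdS S B" shows "psdS S (\<lambda>i j. A i j + B i j)"
proof -
  have e: "x i * (A i j + B i j) * x j = x i * A i j * x j + x i * B i j * x j" for x i j
    by (simp add: algebra_simps)
  have "Q S (\<lambda>i j. A i j + B i j) x = Q S A x + Q S B x" for x
    unfolding Q_def e by (simp add: sum.distrib)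
  moreover have "A i j + B i j = A j i + B j i" if "i \<in> S" "j \<in> S" for i j
  proof -
    have "A i j = A j i" "B i j = B j i" using assms that unfolding psdS_def by blast+
    then show ?thesis by simp
  qed
  moreover have "0 \<le> Q S (\<lambda>i j. A i j + B i j) x" for x
    using calculation(1)[of x] psdS_Q[OF assms(1), of x] psdS_Q[OF assms(2), of x] by simp
  ultimately show ?thesis unfolding psdS_def by blast
qed

lemma psdS_zero: "psdS S (\<lambda>i j. 0)" by (simp add: psdS_def Q_def)

lemma quad_form: assumes "M \<in> carrier_mat n n" "v \<in> carrier_vec n"
  shows "v \<bullet> (M *\<^sub>v v) = Q {..<n} (ent M) (\<lambda>i. v $ i)"
proof -
  have r: "row M i \<bullet> v = (\<Sum>j<n. M $$ (i,j) * v $ j)" if "i < n" for i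
    unfolding scalar_prod_def using assms that by (auto simp: atLeast0LessThan intro: sum.cong)
  have sp: "w \<in> carrier_vec n \<Longrightarrow> u \<bullet> w = (\<Sum>i<n. u $ i * w $ i)" for u w :: "real vec"
    by (simp add: scalar_prod_def atLeast0LessThan)
  have "v \<bullet> (M *\<^sub>v v) = (\<Sum>i<n. v $ i * (M *\<^sub>v v) $ i)"
    by (rule sp) (use assms in simp)
  also have "\<dots> = (\<Sum>i<n. v $ i * (row M i \<bullet> v))"
    using assms by (intro sum.cong refl) simp
  also have "\<dots> = (\<Sum>i<n. v $ i * (\<Sum>j<n. M $$ (i,j) * v $ j))"
    using r by (intro sum.cong refl) simp
  also have "\<dots> = Q {..<n} (ent M) (\<lambda>i. v $ i)"
    unfolding Q_def ent_def by (simp add: sum_distrib_left mult.assoc)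
  finally show ?thesis .
qed

lemma psd_iff: assumes M: "M \<in> carrier_mat n n" shows "psd M \<longleftrightarrow> psdS {..<n} (ent M)"
proof
  assume p: "psd M"
  show "psdS {..<n} (ent M)" unfolding psdS_def
  proof (intro conjI ballI allI)
    fix i j assume "i \<in> {..<n}" "j \<in> {..<n}"
    then have "transpose_mat M $$ (i,j) = M $$ (j,i)" using M by simp
    then show "ent M i j = ent M j i" using p unfolding psd_def ent_def by simp
  next
    fix x
    have "vec n x \<bullet> (M *\<^sub>v vec n x) = Q {..<n} (ent M) (\<lambda>i. vec n x $ i)"
      using quad_form[OF M] by simp
    also have "\<dots> = Q {..<n} (ent M) x" unfolding Q_def by (intro sum.cong refl) simp
    moreover have all: "\<forall>v\<in>carrier_vec n. 0 \<le> v \<bullet> (M *\<^sub>v v)" using p M unfolding psd_def by auto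
    ultimately show "0 \<le> Q {..<n} (ent M) x" using all[rule_format, OF vec_carrier[of n x]] by simp
  qed
next
  assume p: "psdS {..<n} (ent M)"
  have "transpose_mat M = M"
  proof (rule eq_matI)
    fix i j assume d: "i < dim_row M" "j < dim_col M"
    have ij: "i < n" "j < n" using d M by auto
    moreover have "\<forall>i\<in>{..<n}. \<forall>j\<in>{..<n}. ent M i j = ent M j i" using p unfolding psdS_def by blast
    ultimately have "ent M j i = ent M i j" by (metis lessThan_iff)
    then show "transpose_mat M $$ (i,j) = M $$ (i,j)" using M ij unfolding ent_def by simp
  qed (use M in auto)
  moreover have "\<forall>v\<in>carrier_vec n. 0 \<le> v \<bullet> (M *\<^sub>v v)" using quad_form[OF M] psdS_Q[OF p] by simp
  ultimately show "psd M" using M unfolding psd_def by auto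
qed

lemma psd_add_mat: assumes "X \<in> carrier_mat N N" "Y \<in> carrier_mat N N" "psd X" "psd Y" shows "psd (X + Y)"
proof -
  have "psdS {..<N} (ent X)" "psdS {..<N} (ent Y)" using assms psd_iff[OF assms(1)] psd_iff[OF assms(2)] by auto
  then have "psdS {..<N} (\<lambda>i j. ent X i j + ent Y i j)" by (rule psdS_add)
  then have "psdS {..<N} (ent (X + Y))" by (rule psdS_cong) (use assms in \<open>auto simp: ent_def\<close>)
  moreover have c: "X + Y \<in> carrier_mat N N" using assms by simp
  ultimately show ?thesis using psd_iff[OF c] by blast
qed

lemma kron_carrier: "A \<in> carrier_mat n n \<Longrightarrow> B \<in> carrier_mat m m \<Longrightarrow> kron A B \<in> carrier_mat (n*m) (n*m)"
  unfolding kron_def carrier_mat_def by auto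

lemma kron_ent: "A \<in> carrier_mat n n \<Longrightarrow> B \<in> carrier_mat m m \<Longrightarrow> i < n*m \<Longrightarrow> j < n*m \<Longrightarrow>
  ent (kron A B) i j = kf m (ent A) (ent B) i j"
proof -
  assume a: "A \<in> carrier_mat n n" "B \<in> carrier_mat m m" "i < n*m" "j < n*m"
  then have "dim_row A = n" "dim_col A = n" "dim_row B = m" "dim_col B = m" by auto
  then show ?thesis unfolding kron_def ent_def kf_def using index_mat(1)[of i "n*m" j "n*m"] a(3,4) by simp
qed




definition good :: "nat \<Rightarrow> nat \<Rightarrow> (real mat \<Rightarrow> real mat) \<Rightarrow> bool" where
 "good N n F \<longleftrightarrow> (\<forall>X Y Z. X \<in> carrier_mat N N \<longrightarrow> Y \<in> carrier_mat N N \<longrightarrow> Z \<in> carrier_mat N N \<longrightarrow>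
   psd X \<longrightarrow> psd Y \<longrightarrow> psd Z \<longrightarrow>
   F X \<in> carrier_mat n n \<and> psdS {..<n} (ent (F X)) \<and>
   psdS {..<n} (\<lambda>i j. ent (F (X+Y)) i j - ent (F X) i j) \<and>
   psdS {..<n} (\<lambda>i j. ent (F X) i j + ent (F (X+Y+Z)) i j - ent (F (X+Y)) i j - ent (F (X+Z)) i j))"

lemma goodD:
  assumes "good N n F" "X \<in> carrier_mat N N" "Y \<in> carrier_mat N N" "Z \<in> carrier_mat N N" "psd X" "psd Y" "psd Z"
  shows "F X \<in> carrier_mat n n" "psdS {..<n} (ent (F X))"
    "psdS {..<n} (\<lambda>i j. ent (F (X+Y)) i j - ent (F X) i j)"
    "psdS {..<n} (\<lambda>i j. ent (F X) i j + ent (F (X+Y+Z)) i j - ent (F (X+Y)) i j - ent (F (X+Z)) i j)"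
proof -
  note h = assms(1)[unfolded good_def, rule_format, OF assms(2-7)]
  show "F X \<in> carrier_mat n n" using h by blast
  show "psdS {..<n} (ent (F X))" using h by blast
  show "psdS {..<n} (\<lambda>i j. ent (F (X+Y)) i j - ent (F X) i j)" using h by blast
  show "psdS {..<n} (\<lambda>i j. ent (F X) i j + ent (F (X+Y+Z)) i j - ent (F (X+Y)) i j - ent (F (X+Z)) i j)"
    using h by blast
qed

lemma goodI:
  assumes "\<And>X Y Z. X \<in> carrier_mat N N \<Longrightarrow> Y \<in> carrier_mat N N \<Longrightarrow> Z \<in> carrier_mat N N \<Longrightarrow>
   psd X \<Longrightarrow> psd Y \<Longrightarrow> psd Z \<Longrightarrow>
   F X \<in> carrier_mat n n \<and> psdS {..<n} (ent (F X)) \<and>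
   psdS {..<n} (\<lambda>i j. ent (F (X+Y)) i j - ent (F X) i j) \<and>
   psdS {..<n} (\<lambda>i j. ent (F X) i j + ent (F (X+Y+Z)) i j - ent (F (X+Y)) i j - ent (F (X+Z)) i j)"
  shows "good N n F"
  unfolding good_def using assms by blast

lemma good_id: "good N N (\<lambda>A. A)"
proof (rule goodI)
  fix X Y Z :: "real mat"
  assume X: "X \<in> carrier_mat N N" and Y: "Y \<in> carrier_mat N N" and Z: "Z \<in> carrier_mat N N"
    and pX: "psd X" and pY: "psd Y" and pZ: "psd Z"
  have d: "dim_row X = N" "dim_col X = N" "dim_row Y = N" "dim_col Y = N" "dim_row Z = N" "dim_col Z = N"
    using X Y Z by auto
  have 1: "psdS {..<N} (ent X)" using psd_iff[OF X] pX by simp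
  have 2: "psdS {..<N} (\<lambda>i j. ent (X+Y) i j - ent X i j)"
  proof (rule psdS_cong)
    show "psdS {..<N} (ent Y)" using psd_iff[OF Y] pY by simp
  next
    fix i j assume "i \<in> {..<N}" "j \<in> {..<N}"
    then show "ent Y i j = ent (X+Y) i j - ent X i j" using d by (simp add: ent_def)
  qed
  have 3: "psdS {..<N} (\<lambda>i j. ent X i j + ent (X+Y+Z) i j - ent (X+Y) i j - ent (X+Z) i j)"
  proof (rule psdS_cong[OF psdS_zero])
    fix i j assume "i \<in> {..<N}" "j \<in> {..<N}"
    then show "0 = ent X i j + ent (X+Y+Z) i j - ent (X+Y) i j - ent (X+Z) i j" using d by (simp add: ent_def)
  qed
  show "X \<in> carrier_mat N N \<and> psdS {..<N} (ent X) \<and> psdS {..<N} (\<lambda>i j. ent (X+Y) i j - ent X i j) \<and>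
    psdS {..<N} (\<lambda>i j. ent X i j + ent (X+Y+Z) i j - ent (X+Y) i j - ent (X+Z) i j)"
    using X 1 2 3 by blast
qed

lemma good_const: assumes C: "C \<in> carrier_mat n n" and pC: "psd C" shows "good N n (\<lambda>_. C)"
proof (rule goodI)
  fix X Y Z :: "real mat"
  have 1: "psdS {..<n} (ent C)" using psd_iff[OF C] pC by simp
  have 2: "psdS {..<n} (\<lambda>i j. ent C i j - ent C i j)" by (rule psdS_cong[OF psdS_zero]) simp
  have 3: "psdS {..<n} (\<lambda>i j. ent C i j + ent C i j - ent C i j - ent C i j)" by (rule psdS_cong[OF psdS_zero]) simp
  show "C \<in> carrier_mat n n \<and> psdS {..<n} (ent C) \<and> psdS {..<n} (\<lambda>i j. ent C i j - ent C i j) \<and>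
    psdS {..<n} (\<lambda>i j. ent C i j + ent C i j - ent C i j - ent C i j)"
    using C 1 2 3 by blast
qed

lemma id6: "(a::real)*a' + d*d' - b*b' - c*c' = a*(a'+d'-b'-c') + (b-a)*(c'-a') + (b-a)*(a'+d'-b'-c') + (c-a)*(b'-a') + (c-a)*(a'+d'-b'-c') + (a+d-b-c)*d'"
  by (simp add: algebra_simps)

lemma id2: "(b::real)*b' - a*a' = (b-a)*b' + a*(b'-a')"
  by (simp add: algebra_simps)




lemma good_kron: assumes F: "good N n F" and G: "good N m G" shows "good N (n*m) (\<lambda>A. kron (F A) (G A))"
proof (rule goodI)
  fix X Y Z :: "real mat"
  assume X: "X \<in> carrier_mat N N" and Y: "Y \<in> carrier_mat N N" and Z: "Z \<in> carrier_mat N N"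
    and pX: "psd X" and pY: "psd Y" and pZ: "psd Z"
  have XY: "X + Y \<in> carrier_mat N N" using X Y by simp
  have XZ: "X + Z \<in> carrier_mat N N" using X Z by simp
  have XYZ: "X + Y + Z \<in> carrier_mat N N" using XY Z by simp
  have pXY: "psd (X+Y)" by (rule psd_add_mat[OF X Y pX pY])
  have pXZ: "psd (X+Z)" by (rule psd_add_mat[OF X Z pX pZ])
  have pXYZ: "psd (X+Y+Z)" by (rule psd_add_mat[OF XY Z pXY pZ])
  note FX = goodD[OF F X Y Z pX pY pZ]
  note FXZ = goodD[OF F X Z Y pX pZ pY]
  note FXY' = goodD[OF F XY Y Z pXY pY pZ]
  note FXZ' = goodD[OF F XZ Y Z pXZ pY pZ]
  note FXYZ' = goodD[OF F XYZ Y Z pXYZ pY pZ]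
  note GX = goodD[OF G X Y Z pX pY pZ]
  note GXZ = goodD[OF G X Z Y pX pZ pY]
  note GXY' = goodD[OF G XY Y Z pXY pY pZ]
  note GXZ' = goodD[OF G XZ Y Z pXZ pY pZ]
  note GXYZ' = goodD[OF G XYZ Y Z pXYZ pY pZ]
  have c1: "kron (F X) (G X) \<in> carrier_mat (n*m) (n*m)" by (rule kron_carrier[OF FX(1) GX(1)])
  have c2: "psdS {..<n*m} (ent (kron (F X) (G X)))"
  proof (rule psdS_cong[OF kf_psdS[OF FX(2) GX(2)]])
    fix i j assume "i \<in> {..<n*m}" "j \<in> {..<n*m}"
    then show "kf m (ent (F X)) (ent (G X)) i j = ent (kron (F X) (G X)) i j"
      using kron_ent[OF FX(1) GX(1)] by simp
  qed
  have c3: "psdS {..<n*m} (\<lambda>i j. ent (kron (F (X+Y)) (G (X+Y))) i j - ent (kron (F X) (G X)) i j)"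
  proof (rule psdS_cong[OF psdS_add[OF kf_psdS[OF FX(3) GXY'(2)] kf_psdS[OF FX(2) GX(3)]]])
    fix i j assume ij: "i \<in> {..<n*m}" "j \<in> {..<n*m}"
    have e1: "ent (kron (F (X+Y)) (G (X+Y))) i j = kf m (ent (F (X+Y))) (ent (G (X+Y))) i j"
      using kron_ent[OF FXY'(1) GXY'(1)] ij by simp
    have e2: "ent (kron (F X) (G X)) i j = kf m (ent (F X)) (ent (G X)) i j"
      using kron_ent[OF FX(1) GX(1)] ij by simp
    show "kf m (\<lambda>i j. ent (F (X+Y)) i j - ent (F X) i j) (ent (G (X+Y))) i j
        + kf m (ent (F X)) (\<lambda>i j. ent (G (X+Y)) i j - ent (G X) i j) i j
        = ent (kron (F (X+Y)) (G (X+Y))) i j - ent (kron (F X) (G X)) i j"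
      unfolding e1 e2 kf_def by (simp add: algebra_simps)
  qed
  note P1 = kf_psdS[OF FX(2) GX(4)]
  note P2 = kf_psdS[OF FX(3) GXZ(3)]
  note P3 = kf_psdS[OF FX(3) GX(4)]
  note P4 = kf_psdS[OF FXZ(3) GX(3)]
  note P5 = kf_psdS[OF FXZ(3) GX(4)]
  note P6 = kf_psdS[OF FX(4) GXYZ'(2)]
  have c4: "psdS {..<n*m} (\<lambda>i j. ent (kron (F X) (G X)) i j + ent (kron (F (X+Y+Z)) (G (X+Y+Z))) i j
      - ent (kron (F (X+Y)) (G (X+Y))) i j - ent (kron (F (X+Z)) (G (X+Z))) i j)"
  proof (rule psdS_cong[OF psdS_add[OF psdS_add[OF psdS_add[OF psdS_add[OF psdS_add[OF P1 P2] P3] P4] P5] P6]])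
    fix i j assume ij: "i \<in> {..<n*m}" "j \<in> {..<n*m}"
    have e1: "ent (kron (F (X+Y)) (G (X+Y))) i j = kf m (ent (F (X+Y))) (ent (G (X+Y))) i j"
      using kron_ent[OF FXY'(1) GXY'(1)] ij by simp
    have e2: "ent (kron (F X) (G X)) i j = kf m (ent (F X)) (ent (G X)) i j"
      using kron_ent[OF FX(1) GX(1)] ij by simp
    have e3: "ent (kron (F (X+Z)) (G (X+Z))) i j = kf m (ent (F (X+Z))) (ent (G (X+Z))) i j"
      using kron_ent[OF FXZ'(1) GXZ'(1)] ij by simp
    have e4: "ent (kron (F (X+Y+Z)) (G (X+Y+Z))) i j = kf m (ent (F (X+Y+Z))) (ent (G (X+Y+Z))) i j"
      using kron_ent[OF FXYZ'(1) GXYZ'(1)] ij by simp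
    show "kf m (ent (F X)) (\<lambda>i j. ent (G X) i j + ent (G (X+Y+Z)) i j - ent (G (X+Y)) i j - ent (G (X+Z)) i j) i j +
        kf m (\<lambda>i j. ent (F (X+Y)) i j - ent (F X) i j) (\<lambda>i j. ent (G (X+Z)) i j - ent (G X) i j) i j +
        kf m (\<lambda>i j. ent (F (X+Y)) i j - ent (F X) i j) (\<lambda>i j. ent (G X) i j + ent (G (X+Y+Z)) i j - ent (G (X+Y)) i j - ent (G (X+Z)) i j) i j +
        kf m (\<lambda>i j. ent (F (X+Z)) i j - ent (F X) i j) (\<lambda>i j. ent (G (X+Y)) i j - ent (G X) i j) i j +
        kf m (\<lambda>i j. ent (F (X+Z)) i j - ent (F X) i j) (\<lambda>i j. ent (G X) i j + ent (G (X+Y+Z)) i j - ent (G (X+Y)) i j - ent (G (X+Z)) i j) i j +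
        kf m (\<lambda>i j. ent (F X) i j + ent (F (X+Y+Z)) i j - ent (F (X+Y)) i j - ent (F (X+Z)) i j) (ent (G (X+Y+Z))) i j
      = ent (kron (F X) (G X)) i j + ent (kron (F (X+Y+Z)) (G (X+Y+Z))) i j
      - ent (kron (F (X+Y)) (G (X+Y))) i j - ent (kron (F (X+Z)) (G (X+Z))) i j"
      unfolding e1 e2 e3 e4 kf_def by (rule id6[symmetric])
  qed
  show "kron (F X) (G X) \<in> carrier_mat (n*m) (n*m) \<and> psdS {..<n*m} (ent (kron (F X) (G X))) \<and>
    psdS {..<n*m} (\<lambda>i j. ent (kron (F (X+Y)) (G (X+Y))) i j - ent (kron (F X) (G X)) i j) \<and>
    psdS {..<n*m} (\<lambda>i j. ent (kron (F X) (G X)) i j + ent (kron (F (X+Y+Z)) (G (X+Y+Z))) i j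
      - ent (kron (F (X+Y)) (G (X+Y))) i j - ent (kron (F (X+Z)) (G (X+Z))) i j)"
    using c1 c2 c3 c4 by blast
qed




lemma psd_one1: "psd (1\<^sub>m 1)"
proof -
  have "psdS {..<1} (ent (1\<^sub>m 1))" unfolding psdS_def Q_def ent_def by simp
  then show ?thesis using psd_iff[OF one_carrier_mat] by blast
qed

lemma good_kron_pow: "good N (N^k) (\<lambda>A. kron_pow A k)"
proof (induction k)
  case 0
  have "good N 1 (\<lambda>_. 1\<^sub>m 1)" by (rule good_const[OF one_carrier_mat psd_one1])
  then show ?case by simp
next
  case (Suc k)
  have "good N (N * N^k) (\<lambda>A. kron A (kron_pow A k))" by (rule good_kron[OF good_id Suc.IH])
  then show ?case by simp
qed

theorem lemma5p9:
  fixes k l N :: nat and X Y Z V :: "real mat"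
  assumes "X \<in> carrier_mat N N" "Y \<in> carrier_mat N N"
    and "Z \<in> carrier_mat N N" "V \<in> carrier_mat N N"
    and "psd X" "psd Y" "psd Z" "psd V"
  shows "loewner_le
    (kron (kron (kron_pow (X + Y) k) V) (kron_pow (X + Y) l)
      + kron (kron (kron_pow (X + Z) k) V) (kron_pow (X + Z) l))
    (kron (kron (kron_pow X k) V) (kron_pow X l)
      + kron (kron (kron_pow (X + Y + Z) k) V) (kron_pow (X + Y + Z) l))"
proof -
  note X = assms(1) and Y = assms(2) and Z = assms(3) and V = assms(4)
  note pX = assms(5) and pY = assms(6) and pZ = assms(7) and pV = assms(8)
  define F where "F = (\<lambda>A. kron (kron (kron_pow A k) V) (kron_pow A l))"
  define n where "n = N^k * N * N^l"
  have gF: "good N n F" unfolding F_def n_def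
    by (rule good_kron[OF good_kron[OF good_kron_pow good_const[OF V pV]] good_kron_pow])
  have XY: "X + Y \<in> carrier_mat N N" using X Y by simp
  have XZ: "X + Z \<in> carrier_mat N N" using X Z by simp
  have XYZ: "X + Y + Z \<in> carrier_mat N N" using XY Z by simp
  have pXY: "psd (X+Y)" by (rule psd_add_mat[OF X Y pX pY])
  have pXZ: "psd (X+Z)" by (rule psd_add_mat[OF X Z pX pZ])
  have pXYZ: "psd (X+Y+Z)" by (rule psd_add_mat[OF XY Z pXY pZ])
  note FX = goodD[OF gF X Y Z pX pY pZ]
  note FXY = goodD[OF gF XY Y Z pXY pY pZ]
  note FXZ = goodD[OF gF XZ Y Z pXZ pY pZ]
  note FXYZ = goodD[OF gF XYZ Y Z pXYZ pY pZ]
  have cS: "F (X+Y) + F (X+Z) \<in> carrier_mat n n" using FXY(1) FXZ(1) by simp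
  have cT: "F X + F (X+Y+Z) \<in> carrier_mat n n" using FX(1) FXYZ(1) by simp
  have cD: "F X + F (X+Y+Z) - (F (X+Y) + F (X+Z)) \<in> carrier_mat n n" by (rule minus_carrier_mat[OF cS])
  have d: "dim_row (F X) = n" "dim_col (F X) = n" "dim_row (F (X+Y)) = n" "dim_col (F (X+Y)) = n"
    "dim_row (F (X+Z)) = n" "dim_col (F (X+Z)) = n" "dim_row (F (X+Y+Z)) = n" "dim_col (F (X+Y+Z)) = n"
    using FX(1) FXY(1) FXZ(1) FXYZ(1) by auto
  have "psdS {..<n} (ent (F X + F (X+Y+Z) - (F (X+Y) + F (X+Z))))"
  proof (rule psdS_cong[OF FX(4)])
    fix i j assume "i \<in> {..<n}" "j \<in> {..<n}"
    then show "ent (F X) i j + ent (F (X+Y+Z)) i j - ent (F (X+Y)) i j - ent (F (X+Z)) i j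
       = ent (F X + F (X+Y+Z) - (F (X+Y) + F (X+Z))) i j" using d by (simp add: ent_def)
  qed
  then have "psd (F X + F (X+Y+Z) - (F (X+Y) + F (X+Z)))" using psd_iff[OF cD] by blast
  moreover have "dim_row (F (X+Y) + F (X+Z)) = dim_row (F X + F (X+Y+Z))"
    "dim_col (F (X+Y) + F (X+Z)) = dim_col (F X + F (X+Y+Z))" using d by auto
  ultimately have "loewner_le (F (X+Y) + F (X+Z)) (F X + F (X+Y+Z))"
    unfolding loewner_le_def by blast
  then show ?thesis unfolding F_def .
qed


end
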